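(* Let $\mathbf{M}=(m_{i,j})$ be a $k\times n$ binary matrix satisfying (P1) and (P3). Suppose columns $j_{\max}$ and $j_{\min}$ of $\mathbf{M}$ have, respectively, the maximum and the minimum column weight among all columns of $\mathbf{M}$, and that these two weights differ by at least $2$. Then there exists a row $i_s\in[k]$ with $m_{i_s,j_{\max}}=1$ and $m_{i_s,j_{\min}}=0$ such that the matrix obtained from $\mathbf{M}$ by setting $m_{i_s,j_{\max}}:=0$ and $m_{i_s,j_{\min}}:=1$ still satisfies (P1) and (P3).
   Context: $[n]=\{1,\dots,n\}$. Weight means Hamming weight (number of ones). For a $k\times n$ binary matrix with row supports $R_i=\{j\in[n]: m_{i,j}=1\}$, property (P1) is: each row has weight $n-k+1$; property (P3) is: $\big|\bigcup_{i\in I}R_i\big|\ge n-k+|I|$ for every nonempty $I\subseteq[k]$. (In the paper this is stated as: in every iteration of Algorithm 1, which starts from a matrix satisfying (P1) and (P3) and repeatedly performs such swaps between a maximum-weight and a minimum-weight column while the maximum and minimum column weights differ by at least 2, such a row can always be found.) *)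

theory Defs
  imports Main
begin

text \<open>A k x n binary matrix is modelled as M :: nat => nat => bool, with rows
  indexed by {1..k} and columns by {1..n}; M i j means entry m_{i,j} = 1.
  Entries outside the index range are irrelevant.\<close>

definition row_supp :: "(nat \<Rightarrow> nat \<Rightarrow> bool) \<Rightarrow> nat \<Rightarrow> nat \<Rightarrow> nat set" where
  "row_supp M n i = {j \<in> {1..n}. M i j}"

definition col_weight :: "(nat \<Rightarrow> nat \<Rightarrow> bool) \<Rightarrow> nat \<Rightarrow> nat \<Rightarrow> nat" where
  "col_weight M k j = card {i \<in> {1..k}. M i j}"

definition P1 :: "nat \<Rightarrow> nat \<Rightarrow> (nat \<Rightarrow> nat \<Rightarrow> bool) \<Rightarrow> bool" where
  "P1 k n M \<longleftrightarrow> (\<forall>i \<in> {1..k}. int (card (row_supp M n i)) = int n - int k + 1)"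

definition P3 :: "nat \<Rightarrow> nat \<Rightarrow> (nat \<Rightarrow> nat \<Rightarrow> bool) \<Rightarrow> bool" where
  "P3 k n M \<longleftrightarrow> (\<forall>I. I \<subseteq> {1..k} \<and> I \<noteq> {} \<longrightarrow>
      int (card (\<Union>i\<in>I. row_supp M n i)) \<ge> int n - int k + int (card I))"

definition swap_entries :: "(nat \<Rightarrow> nat \<Rightarrow> bool) \<Rightarrow> nat \<Rightarrow> nat \<Rightarrow> nat \<Rightarrow> nat \<Rightarrow> nat \<Rightarrow> bool" where
  "swap_entries M is jmax jmin =
     (\<lambda>i j. if i = is \<and> j = jmax then False
            else if i = is \<and> j = jmin then True
            else M i j)"

end

theory Submission
  imports Defs
begin

lemma supp_fin: "finite (row_supp M n i)"
  unfolding row_supp_def by simp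

lemma U_fin: "finite (\<Union>i\<in>I. row_supp M n i)"
proof -
  have "(\<Union>i\<in>I. row_supp M n i) \<subseteq> {1..n}" unfolding row_supp_def by auto
  thus ?thesis by (rule finite_subset) simp
qed

lemma swap_other: "i \<noteq> a \<Longrightarrow> row_supp (swap_entries M a jmax jmin) n i = row_supp M n i"
  unfolding row_supp_def swap_entries_def by auto

lemma swap_same: "jmin \<in> {1..n} \<Longrightarrow> jmax \<noteq> jmin \<Longrightarrow>
   row_supp (swap_entries M a jmax jmin) n a = insert jmin (row_supp M n a - {jmax})"
  unfolding row_supp_def swap_entries_def by auto

lemma swap_U_other: "a \<notin> I \<Longrightarrow>
  (\<Union>i\<in>I. row_supp (swap_entries M a jmax jmin) n i) = (\<Union>i\<in>I. row_supp M n i)"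
  using swap_other by (metis (no_types, lifting) SUP_cong)

lemma bad_set:
  assumes P3: "P3 k n M" and a: "a \<in> {1..k}" "M a jmax" "\<not> M a jmin"
    and j: "jmax \<in> {1..n}" "jmin \<in> {1..n}" "jmax \<noteq> jmin"
    and nP3: "\<not> P3 k n (swap_entries M a jmax jmin)"
  shows "\<exists>I. a \<in> I \<and> I \<subseteq> {1..k} \<and>
     int (card (\<Union>i\<in>I. row_supp M n i)) = int n - int k + int (card I) \<and>
     jmax \<notin> (\<Union>i\<in>I-{a}. row_supp M n i) \<and> jmin \<in> (\<Union>i\<in>I-{a}. row_supp M n i)"
proof -
  let ?M' = "swap_entries M a jmax jmin"
  obtain I where I: "I \<subseteq> {1..k}" "I \<noteq> {}"
    and lt: "int (card (\<Union>i\<in>I. row_supp ?M' n i)) < int n - int k + int (card I)"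
    using nP3 unfolding P3_def by (auto simp: not_le)
  have ge: "int (card (\<Union>i\<in>I. row_supp M n i)) \<ge> int n - int k + int (card I)"
    using P3 I unfolding P3_def by auto
  have aI: "a \<in> I"
  proof (rule ccontr)
    assume "a \<notin> I"
    then show False using swap_U_other[of a I M jmax jmin n] lt ge by simp
  qed
  define V where "V = (\<Union>i\<in>I-{a}. row_supp M n i)"
  define R where "R = row_supp M n a"
  have V': "(\<Union>i\<in>I-{a}. row_supp ?M' n i) = V"
    unfolding V_def by (rule swap_U_other) simp
  have Ieq: "I = insert a (I - {a})" using aI by auto
  have U: "(\<Union>i\<in>I. row_supp M n i) = V \<union> R"
    unfolding V_def R_def by (subst Ieq) auto
  have U': "(\<Union>i\<in>I. row_supp ?M' n i) = V \<union> insert jmin (R - {jmax})"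
    using V' swap_same[OF j(2) j(3), of M a] unfolding R_def by (subst Ieq) auto
  have lt': "int (card (V \<union> insert jmin (R - {jmax}))) < int n - int k + int (card I)"
    using lt U' by simp
  have ge': "int (card (V \<union> R)) \<ge> int n - int k + int (card I)" using ge U by simp
  have fV: "finite V" unfolding V_def by (rule U_fin)
  have fR: "finite R" unfolding R_def by (rule supp_fin)
  have Rmax: "jmax \<in> R" "jmin \<notin> R" using a j unfolding R_def row_supp_def by auto
  have sub: "V \<union> R \<subseteq> insert jmax (V \<union> insert jmin (R - {jmax}))" by auto
  have "card (V \<union> R) \<le> card (insert jmax (V \<union> insert jmin (R - {jmax})))"
    using sub fV fR by (intro card_mono) auto
  also have "\<dots> \<le> card (V \<union> insert jmin (R - {jmax})) + 1"
    using card_insert_le_m1 fV fR by (simp add: card_insert_if)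
  finally have c1: "card (V \<union> R) \<le> card (V \<union> insert jmin (R - {jmax})) + 1" .
  have tight: "int (card (V \<union> R)) = int n - int k + int (card I)"
    using c1 lt' ge' by linarith
  have nmax: "jmax \<notin> V"
  proof
    assume "jmax \<in> V"
    then have "V \<union> R \<subseteq> V \<union> insert jmin (R - {jmax})" by auto
    then have "card (V \<union> R) \<le> card (V \<union> insert jmin (R - {jmax}))"
      using fV fR by (intro card_mono) auto
    then show False using lt' ge' by linarith
  qed
  have hmin: "jmin \<in> V"
  proof (rule ccontr)
    assume nm: "jmin \<notin> V"
    have "V \<union> insert jmin (R - {jmax}) = insert jmin ((V \<union> R) - {jmax})"
      using nmax by auto
    moreover have "card (V \<union> R) > 0" using fV fR Rmax card_gt_0_iff by blast
    moreover have "card (insert jmin ((V \<union> R) - {jmax})) = card (V \<union> R)"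
      using nm Rmax fV fR j(3) calculation(2) by (simp add: card_insert_if card_Diff_singleton)
    ultimately have "card (V \<union> insert jmin (R - {jmax})) = card (V \<union> R)" by simp
    then show False using lt' ge' by linarith
  qed
  show ?thesis
    using aI I tight nmax hmin U unfolding V_def by (intro exI[of _ I]) auto
qed

theorem lemma7:
  fixes k n :: nat and M :: "nat \<Rightarrow> nat \<Rightarrow> bool" and jmax jmin :: nat
  assumes "P1 k n M" and "P3 k n M"
    and "jmax \<in> {1..n}" and "jmin \<in> {1..n}"
    and "\<forall>j \<in> {1..n}. col_weight M k j \<le> col_weight M k jmax"
    and "\<forall>j \<in> {1..n}. col_weight M k jmin \<le> col_weight M k j"
    and "col_weight M k jmax \<ge> col_weight M k jmin + 2"
  shows "\<exists>is \<in> {1..k}. M is jmax \<and> \<not> M is jmin \<and>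
           P1 k n (swap_entries M is jmax jmin) \<and> P3 k n (swap_entries M is jmax jmin)"
proof (rule ccontr)
  assume H: "\<not> ?thesis"
  have jne: "jmax \<noteq> jmin" using assms(7) by auto
  define A where "A = {i \<in> {1..k}. M i jmax \<and> \<not> M i jmin}"
  have P1s: "P1 k n (swap_entries M a jmax jmin)" if "a \<in> A" for a
    unfolding P1_def
  proof
    fix i assume i: "i \<in> {1..k}"
    show "int (card (row_supp (swap_entries M a jmax jmin) n i)) = int n - int k + 1"
    proof (cases "i = a")
      case False then show ?thesis using assms(1) i swap_other unfolding P1_def by metis
    next
      case True
      have fR: "finite (row_supp M n a)" by (rule supp_fin)
      have "jmax \<in> row_supp M n a" "jmin \<notin> row_supp M n a"
        using that assms(3) unfolding A_def row_supp_def by auto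
      moreover have "card (row_supp M n a) > 0" using fR calculation card_gt_0_iff by blast
      ultimately have "card (insert jmin (row_supp M n a - {jmax})) = card (row_supp M n a)"
        using fR jne by (simp add: card_insert_if card_Diff_singleton)
      then show ?thesis using True swap_same[OF assms(4) jne] assms(1) i that
        unfolding P1_def A_def by auto
    qed
  qed
  have bad: "\<forall>a\<in>A. \<exists>I. a \<in> I \<and> I \<subseteq> {1..k} \<and>
     int (card (\<Union>i\<in>I. row_supp M n i)) = int n - int k + int (card I) \<and>
     jmax \<notin> (\<Union>i\<in>I-{a}. row_supp M n i) \<and> jmin \<in> (\<Union>i\<in>I-{a}. row_supp M n i)"
  proof
    fix a assume aA: "a \<in> A"
    have "\<not> P3 k n (swap_entries M a jmax jmin)" using H P1s[OF aA] aA unfolding A_def by auto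
    then show "\<exists>I. a \<in> I \<and> I \<subseteq> {1..k} \<and>
     int (card (\<Union>i\<in>I. row_supp M n i)) = int n - int k + int (card I) \<and>
     jmax \<notin> (\<Union>i\<in>I-{a}. row_supp M n i) \<and> jmin \<in> (\<Union>i\<in>I-{a}. row_supp M n i)"
      using bad_set[OF assms(2) _ _ _ assms(3) assms(4) jne] aA unfolding A_def by auto
  qed
  then obtain f where f: "\<And>a. a \<in> A \<Longrightarrow> a \<in> f a \<and> f a \<subseteq> {1..k} \<and>
     int (card (\<Union>i\<in>f a. row_supp M n i)) = int n - int k + int (card (f a)) \<and>
     jmax \<notin> (\<Union>i\<in>f a-{a}. row_supp M n i) \<and> jmin \<in> (\<Union>i\<in>f a-{a}. row_supp M n i)"
    by metis
  have "\<forall>a\<in>A. \<exists>c. c \<in> f a - {a} \<and> M c jmin \<and> \<not> M c jmax"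
  proof
    fix a assume aA: "a \<in> A"
    from f[OF aA] obtain c where c: "c \<in> f a - {a}" "jmin \<in> row_supp M n c" by auto
    have "jmax \<notin> row_supp M n c" using f[OF aA] c by auto
    then show "\<exists>c. c \<in> f a - {a} \<and> M c jmin \<and> \<not> M c jmax"
      using c assms(3) unfolding row_supp_def by auto
  qed
  then obtain g where g: "\<And>a. a \<in> A \<Longrightarrow> g a \<in> f a - {a} \<and> M (g a) jmin \<and> \<not> M (g a) jmax"
    by metis
  define B where "B = {i \<in> {1..k}. M i jmin \<and> \<not> M i jmax}"
  have gB: "g ` A \<subseteq> B" using g f unfolding B_def by blast
  have disj: False if ab: "a \<in> A" "b \<in> A" "a \<noteq> b" "c \<in> f a" "c \<in> f b" for a b c
  proof -
    define Ia where "Ia = f a"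
    define Ib where "Ib = f b"
    define Ua where "Ua = (\<Union>i\<in>Ia. row_supp M n i)"
    define Ub where "Ub = (\<Union>i\<in>Ib. row_supp M n i)"
    define K where "K = Ia \<inter> Ib"
    have ra: "jmax \<in> row_supp M n a" "jmax \<in> row_supp M n b"
      using ab assms(3) unfolding A_def row_supp_def by auto
    have anb: "a \<notin> Ib"
    proof
      assume "a \<in> Ib" then have "jmax \<in> (\<Union>i\<in>f b-{b}. row_supp M n i)"
        using ra ab unfolding Ib_def by auto
      then show False using f[OF ab(2)] by auto
    qed
    have KA: "K \<subseteq> Ia - {a}" unfolding K_def using anb by auto
    have sab: "Ia \<subseteq> {1..k}" "Ib \<subseteq> {1..k}" "a \<in> Ia"
      using f[OF ab(1)] f[OF ab(2)] unfolding Ia_def Ib_def by auto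
    have Kne: "K \<noteq> {}" "K \<subseteq> {1..k}" unfolding K_def using ab(4,5) sab unfolding Ia_def Ib_def by auto
    have UK: "int (card (\<Union>i\<in>K. row_supp M n i)) \<ge> int n - int k + int (card K)"
      using assms(2) Kne unfolding P3_def by auto
    have Uab: "int (card (\<Union>i\<in>Ia \<union> Ib. row_supp M n i)) \<ge> int n - int k + int (card (Ia \<union> Ib))"
    proof -
      have "Ia \<union> Ib \<subseteq> {1..k} \<and> Ia \<union> Ib \<noteq> {}" using sab by auto
      then show ?thesis using assms(2) unfolding P3_def by blast
    qed
    have "(\<Union>i\<in>Ia \<union> Ib. row_supp M n i) = Ua \<union> Ub" unfolding Ua_def Ub_def by auto
    moreover have "insert jmax (\<Union>i\<in>K. row_supp M n i) \<subseteq> Ua \<inter> Ub"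
    proof -
      have "a \<in> Ia" "b \<in> Ib" using f[OF ab(1)] f[OF ab(2)] unfolding Ia_def Ib_def by auto
      then have "jmax \<in> Ua" "jmax \<in> Ub" using ra unfolding Ua_def Ub_def by auto
      moreover have "(\<Union>i\<in>K. row_supp M n i) \<subseteq> Ua" "(\<Union>i\<in>K. row_supp M n i) \<subseteq> Ub"
        unfolding Ua_def Ub_def K_def by auto
      ultimately show ?thesis by auto
    qed
    moreover have "jmax \<notin> (\<Union>i\<in>K. row_supp M n i)" using KA f[OF ab(1)] unfolding Ia_def by blast
    moreover have fU: "finite Ua" "finite Ub" "finite (\<Union>i\<in>K. row_supp M n i)"
      unfolding Ua_def Ub_def by (rule U_fin)+
    ultimately have c1: "card (\<Union>i\<in>K. row_supp M n i) + 1 \<le> card (Ua \<inter> Ub)"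
      "card (\<Union>i\<in>Ia \<union> Ib. row_supp M n i) + card (Ua \<inter> Ub) = card Ua + card Ub"
    proof -
      assume a1: "(\<Union>i\<in>Ia \<union> Ib. row_supp M n i) = Ua \<union> Ub"
        and a2: "insert jmax (\<Union>i\<in>K. row_supp M n i) \<subseteq> Ua \<inter> Ub"
        and a3: "jmax \<notin> (\<Union>i\<in>K. row_supp M n i)"
        and a4: "finite Ua" "finite Ub" "finite (\<Union>i\<in>K. row_supp M n i)"
      have "card (insert jmax (\<Union>i\<in>K. row_supp M n i)) \<le> card (Ua \<inter> Ub)"
        using a2 a4 by (intro card_mono) auto
      then show "card (\<Union>i\<in>K. row_supp M n i) + 1 \<le> card (Ua \<inter> Ub)"
        using a3 a4 by simp
      show "card (\<Union>i\<in>Ia \<union> Ib. row_supp M n i) + card (Ua \<inter> Ub) = card Ua + card Ub"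
        using a1 a4 card_Un_Int by metis
    qed
    have fI: "finite Ia" "finite Ib" using f ab finite_subset unfolding Ia_def Ib_def
      by (metis finite_atLeastAtMost)+
    have c2: "card (Ia \<union> Ib) + card K = card Ia + card Ib"
      unfolding K_def using card_Un_Int fI by metis
    have "int (card Ua) = int n - int k + int (card Ia)"
         "int (card Ub) = int n - int k + int (card Ib)"
      using f ab unfolding Ua_def Ub_def Ia_def Ib_def by auto
    then show False using c1 c2 UK Uab by linarith
  qed
  have inj: "inj_on g A"
  proof (rule inj_onI)
    fix a b assume "a \<in> A" "b \<in> A" "g a = g b"
    then show "a = b" using disj g by (metis DiffD1)
  qed
  have "card A \<le> card B"
    using card_inj_on_le[OF inj gB] unfolding B_def by simp
  moreover have "col_weight M k jmax = card {i \<in> {1..k}. M i jmax \<and> M i jmin} + card A"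
    unfolding col_weight_def A_def
    by (subst card_Un_disjoint[symmetric]) (auto intro: arg_cong[where f=card])
  moreover have "col_weight M k jmin = card {i \<in> {1..k}. M i jmax \<and> M i jmin} + card B"
    unfolding col_weight_def B_def
    by (subst card_Un_disjoint[symmetric]) (auto intro: arg_cong[where f=card])
  ultimately show False using assms(7) by linarith
qed

end
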